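(* Let $D$ be a strong symmetric digraph of order $n$ and $k$ an integer with $2\le k\le n$. Then $\lambda_k(D)\ge 2$ if and only if $D$ has no bridge.
   Context: A digraph $D$ is symmetric if for every arc $xy$, $yx$ is also an arc. A 2-cycle $xyx$ of a strong digraph $D$ is a bridge if $D-\{xy,yx\}$ is disconnected (i.e., its underlying graph is disconnected). For $S\subseteq V(D)$, $\lambda_S(D)$ is the maximum number of pairwise arc-disjoint strong subgraphs of $D$ containing $S$, and $\lambda_k(D)=\min\{\lambda_S(D): S\subseteq V(D), |S|=k\}$. *)

theory Defs
  imports Main
begin

definition digraph :: "'a set \<Rightarrow> ('a \<times> 'a) set \<Rightarrow> bool" where
  "digraph V A \<longleftrightarrow> finite V \<and> A \<subseteq> V \<times> V \<and> (\<forall>x. (x, x) \<notin> A)"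

definition symmetric_digraph :: "'a set \<Rightarrow> ('a \<times> 'a) set \<Rightarrow> bool" where
  "symmetric_digraph V A \<longleftrightarrow> digraph V A \<and> (\<forall>x y. (x, y) \<in> A \<longrightarrow> (y, x) \<in> A)"

definition strong :: "'a set \<Rightarrow> ('a \<times> 'a) set \<Rightarrow> bool" where
  "strong V A \<longleftrightarrow> (\<forall>x\<in>V. \<forall>y\<in>V. (x, y) \<in> A\<^sup>*)"

definition underlying_connected :: "'a set \<Rightarrow> ('a \<times> 'a) set \<Rightarrow> bool" where
  "underlying_connected V A \<longleftrightarrow> (\<forall>x\<in>V. \<forall>y\<in>V. (x, y) \<in> (A \<union> A\<inverse>)\<^sup>*)"

definition is_bridge :: "'a set \<Rightarrow> ('a \<times> 'a) set \<Rightarrow> 'a \<Rightarrow> 'a \<Rightarrow> bool" where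
  "is_bridge V A x y \<longleftrightarrow> (x, y) \<in> A \<and> (y, x) \<in> A \<and>
     \<not> underlying_connected V (A - {(x, y), (y, x)})"

definition has_bridge :: "'a set \<Rightarrow> ('a \<times> 'a) set \<Rightarrow> bool" where
  "has_bridge V A \<longleftrightarrow> (\<exists>x y. is_bridge V A x y)"

definition strong_subgraph_containing ::
  "'a set \<Rightarrow> ('a \<times> 'a) set \<Rightarrow> 'a set \<Rightarrow> 'a set \<Rightarrow> ('a \<times> 'a) set \<Rightarrow> bool" where
  "strong_subgraph_containing V A S V' A' \<longleftrightarrow>
     V' \<subseteq> V \<and> A' \<subseteq> A \<and> A' \<subseteq> V' \<times> V' \<and> S \<subseteq> V' \<and> strong V' A'"

definition lambda_S :: "'a set \<Rightarrow> ('a \<times> 'a) set \<Rightarrow> 'a set \<Rightarrow> nat" where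
  "lambda_S V A S = Sup {m. \<exists>H :: nat \<Rightarrow> 'a set \<times> ('a \<times> 'a) set.
       (\<forall>i<m. strong_subgraph_containing V A S (fst (H i)) (snd (H i))) \<and>
       (\<forall>i<m. \<forall>j<m. i \<noteq> j \<longrightarrow> snd (H i) \<inter> snd (H j) = {})}"

definition lambda_k :: "'a set \<Rightarrow> ('a \<times> 'a) set \<Rightarrow> nat \<Rightarrow> nat" where
  "lambda_k V A k = Min {lambda_S V A S | S. S \<subseteq> V \<and> card S = k}"

end

theory Submission
  imports Defs "HOL-Library.Transitive_Closure_Table"
begin

lemma sym_rtrancl:
  assumes "\<And>a b. (a,b) \<in> F \<Longrightarrow> (b,a) \<in> F" and "(a,b) \<in> F\<^sup>*"
  shows "(b,a) \<in> F\<^sup>*"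
  using assms(2)
proof (induction rule: rtrancl_induct)
  case base then show ?case by simp
next
  case (step c d)
  then show ?case using assms(1) by (meson converse_rtrancl_into_rtrancl)
qed

lemma bridge_arc:
  assumes sym: "\<forall>a b. (a,b)\<in>A \<longrightarrow> (b,a)\<in>A" and str: "strong V A"
    and br: "\<not> underlying_connected V (A - {(x,y),(y,x)})"
    and xy: "(x,y) \<in> A'\<^sup>*" and sub: "A' \<subseteq> A" and xV: "x \<in> V"
  shows "(x,y) \<in> A'"
proof (rule ccontr)
  assume nxy: "(x,y) \<notin> A'"
  define F where "F = A - {(x,y),(y,x)}"
  have Fsym: "\<And>a b. (a,b)\<in>F \<Longrightarrow> (b,a)\<in>F" using sym by (auto simp: F_def)
  have 1: "(x,v) \<in> F\<^sup>*" if "(x,v) \<in> (A-{(x,y)})\<^sup>*" for v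
    using that
  proof (induction rule: rtrancl_induct)
    case base then show ?case by simp
  next
    case (step v v')
    show ?case
    proof (cases "(v,v') \<in> F")
      case True then show ?thesis using step by (meson rtrancl_into_rtrancl)
    next
      case False then have "v' = x" using step by (auto simp: F_def)
      then show ?thesis by simp
    qed
  qed
  have "A' \<subseteq> A - {(x,y)}" using sub nxy by auto
  then have "(x,y) \<in> (A-{(x,y)})\<^sup>*" using xy rtrancl_mono by blast
  then have xyF: "(x,y) \<in> F\<^sup>*" using 1 by blast
  have 2: "(x,v) \<in> F\<^sup>*" if "(x,v) \<in> A\<^sup>*" for v
    using that
  proof (induction rule: rtrancl_induct)
    case base then show ?case by simp
  next
    case (step v v')
    show ?case
    proof (cases "(v,v') \<in> F")
      case True then show ?thesis using step by (meson rtrancl_into_rtrancl)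
    next
      case False then have "v' = x \<or> v' = y" using step by (auto simp: F_def)
      then show ?thesis using xyF by auto
    qed
  qed
  have "underlying_connected V F"
    unfolding underlying_connected_def
  proof (intro ballI)
    fix a b assume "a \<in> V" "b \<in> V"
    then have "(x,a) \<in> F\<^sup>*" "(x,b) \<in> F\<^sup>*" using 2 str xV by (auto simp: strong_def)
    then have "(a,b) \<in> F\<^sup>*" using sym_rtrancl[OF Fsym] by (meson rtrancl_trans)
    then show "(a,b) \<in> (F \<union> F\<inverse>)\<^sup>*" by (meson Un_upper1 rtrancl_mono subsetD)
  qed
  then show False using br by (simp add: F_def)
qed

fun arcs :: "'a \<Rightarrow> 'a list \<Rightarrow> ('a \<times> 'a) set" where
  "arcs x [] = {}"
| "arcs x (y # ys) = insert (x,y) (arcs y ys)"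

lemma arcs_props:
  assumes "rtrancl_path r w xs z" "distinct (w # xs)"
  shows "(\<forall>p q. (p,q) \<in> arcs w xs \<longrightarrow> r p q \<and> p \<in> set (w#xs) \<and> q \<in> set (w#xs) \<and> (q,p) \<notin> arcs w xs)
     \<and> (\<forall>q\<in>set (w#xs). (w,q) \<in> (arcs w xs)\<^sup>* \<and> (q,z) \<in> (arcs w xs)\<^sup>*)"
  using assms
proof (induction rule: rtrancl_path.induct)
  case (base x)
  then show ?case by simp
next
  case (step x y ys z)
  have d: "distinct (y#ys)" "x \<notin> set (y#ys)" using step.prems by auto
  note IH = step.IH[OF d(1)]
  have m: "(arcs y ys)\<^sup>* \<subseteq> (arcs x (y#ys))\<^sup>*" by (simp add: rtrancl_mono subset_insertI)
  have xy: "(x,y) \<in> (arcs x (y#ys))\<^sup>*" by auto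
  have A: "\<forall>p q. (p,q) \<in> arcs x (y#ys) \<longrightarrow> r p q \<and> p \<in> set (x#y#ys) \<and> q \<in> set (x#y#ys) \<and> (q,p) \<notin> arcs x (y#ys)"
    using IH d step.hyps(1) by auto
  have B: "\<forall>q\<in>set (x#y#ys). (x,q) \<in> (arcs x (y#ys))\<^sup>* \<and> (q,z) \<in> (arcs x (y#ys))\<^sup>*"
  proof
    fix q assume q: "q \<in> set (x#y#ys)"
    have yz: "(y,z) \<in> (arcs x (y#ys))\<^sup>*" using IH m by auto
    show "(x,q) \<in> (arcs x (y#ys))\<^sup>* \<and> (q,z) \<in> (arcs x (y#ys))\<^sup>*"
    proof (cases "q = x")
      case True then show ?thesis using xy yz by (meson rtrancl_trans rtrancl.rtrancl_refl)
    next
      case False then have "q \<in> set (y#ys)" using q by simp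
      then have "(y,q) \<in> (arcs x (y#ys))\<^sup>*" "(q,z) \<in> (arcs x (y#ys))\<^sup>*" using IH m by auto
      then show ?thesis using xy by (meson rtrancl_trans)
    qed
  qed
  show ?case using A B by simp
qed

lemma rtrancl_path_last_in:
  assumes "rtrancl_path r w xs z" shows "z \<in> set (w # xs)"
  using assms by (induction rule: rtrancl_path.induct) auto

lemma exit_edge:
  assumes "(a,b) \<in> R\<^sup>*" "a \<in> W" "b \<notin> W"
  shows "\<exists>u w. (u,w) \<in> R \<and> u \<in> W \<and> w \<notin> W"
  using assms by (induction rule: rtrancl_induct) auto

lemma first_hit:
  assumes "(a,b) \<in> F\<^sup>*" "b \<in> W" "a \<notin> W"
  shows "\<exists>v z. (a,v) \<in> {(p,q). (p,q)\<in>F \<and> p\<notin>W \<and> q\<notin>W}\<^sup>* \<and> (v,z)\<in>F \<and> v\<notin>W \<and> z\<in>W"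
  using assms
proof (induction rule: converse_rtrancl_induct)
  case base then show ?case by simp
next
  case (step a c)
  show ?case
  proof (cases "c \<in> W")
    case True then show ?thesis using step by blast
  next
    case False
    then obtain v z where "(c,v) \<in> {(p,q). (p,q)\<in>F \<and> p\<notin>W \<and> q\<notin>W}\<^sup>*" "(v,z)\<in>F" "v\<notin>W" "z\<in>W"
      using step by blast
    moreover have "(a,c) \<in> {(p,q). (p,q)\<in>F \<and> p\<notin>W \<and> q\<notin>W}" using step False by auto
    ultimately show ?thesis by (meson converse_rtrancl_into_rtrancl)
  qed
qed


lemma robbins_step:
  assumes sym: "\<forall>a b. (a,b)\<in>A \<longrightarrow> (b,a)\<in>A" and AV: "A \<subseteq> V \<times> V"
    and str: "strong V A" and nb: "\<not> has_bridge V A"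
    and WV: "W \<subseteq> V" and Wne: "a0 \<in> W" and WV': "W \<noteq> V"
    and OA: "Q \<subseteq> A" and OW: "Q \<subseteq> W \<times> W" and anti: "\<forall>p q. (p,q)\<in>Q \<longrightarrow> (q,p)\<notin>Q"
    and sO: "strong W Q"
  shows "\<exists>W' Q'. W \<subset> W' \<and> W' \<subseteq> V \<and> Q' \<subseteq> A \<and> Q' \<subseteq> W' \<times> W' \<and>
     (\<forall>p q. (p,q)\<in>Q' \<longrightarrow> (q,p)\<notin>Q') \<and> strong W' Q'"
proof -
  obtain b where b: "b \<in> V" "b \<notin> W" using WV WV' by auto
  have "(a0,b) \<in> A\<^sup>*" using str b WV Wne by (auto simp: strong_def)
  then obtain u w where uw: "(u,w) \<in> A" "u \<in> W" "w \<notin> W" using exit_edge Wne b by metis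
  have wV: "w \<in> V" using uw AV by auto
  define F where "F = A - {(u,w),(w,u)}"
  have "(w,u) \<in> A" using sym uw by auto
  then have "underlying_connected V F" using nb uw unfolding has_bridge_def is_bridge_def F_def by blast
  then have "(w,u) \<in> (F \<union> F\<inverse>)\<^sup>*" using wV uw WV unfolding underlying_connected_def by auto
  moreover have FF: "F \<union> F\<inverse> = F" using sym by (auto simp: F_def)
  ultimately have wuF: "(w,u) \<in> F\<^sup>*" by (simp only: FF)
  obtain v z where vz: "(w,v) \<in> {(p,q). (p,q)\<in>F \<and> p\<notin>W \<and> q\<notin>W}\<^sup>*" "(v,z)\<in>F" "v\<notin>W" "z\<in>W"
    using first_hit[OF wuF uw(2) uw(3)] by blast
  define R where "R = {(p,q). (p,q)\<in>F \<and> p\<notin>W \<and> q\<notin>W}"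
  have "(\<lambda>p q. (p,q) \<in> R)\<^sup>*\<^sup>* w v" using vz(1) unfolding R_def rtranclp_rtrancl_eq by simp
  then obtain xs0 where "rtrancl_path (\<lambda>p q. (p,q) \<in> R) w xs0 v" unfolding rtranclp_eq_rtrancl_path by blast
  then obtain xs where path: "rtrancl_path (\<lambda>p q. (p,q) \<in> R) w xs v" and dist: "distinct (w#xs)"
    by (rule rtrancl_path_distinct)
  define P where "P = arcs w xs"
  note pp = arcs_props[OF path dist, folded P_def]
  have vin: "v \<in> set (w#xs)" using rtrancl_path_last_in[OF path] .
  have setV: "set (w#xs) \<subseteq> V \<and> set (w#xs) \<inter> W = {}"
  proof -
    have "q \<in> V \<and> q \<notin> W" if "q \<in> set xs" for q
    proof -
      have "Rangep (\<lambda>p q. (p,q) \<in> R) q" using rtrancl_path_Range[OF path that] .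
      then show ?thesis using AV by (auto simp: R_def F_def)
    qed
    then show ?thesis using wV uw by auto
  qed
  have PR: "\<And>p q. (p,q) \<in> P \<Longrightarrow> (p,q)\<in>F \<and> p\<notin>W \<and> q\<notin>W \<and> (q,p) \<notin> P \<and> p \<in> set (w#xs) \<and> q \<in> set (w#xs)"
    using pp unfolding R_def by auto
  define W' where "W' = W \<union> set (w#xs)"
  define Q' where "Q' = Q \<union> P \<union> {(u,w),(v,z)}"
  have FA: "F \<subseteq> A" by (auto simp: F_def)
  have PA: "P \<subseteq> A"
  proof (rule subrelI)
    fix p q assume "(p,q) \<in> P" then show "(p,q) \<in> A" using PR FA by blast
  qed
  have PW: "P \<subseteq> W' \<times> W'"
  proof (rule subrelI)
    fix p q assume "(p,q) \<in> P" then show "(p,q) \<in> W' \<times> W'" using PR unfolding W'_def by blast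
  qed
  have "(v,z) \<in> A" using vz FA by blast
  moreover have "z \<in> W'" "u \<in> W'" "v \<in> W'" "w \<in> W'" using vz uw vin unfolding W'_def by auto
  moreover have "Q \<subseteq> W' \<times> W'" using OW unfolding W'_def by blast
  ultimately have QA: "Q' \<subseteq> A" and QW: "Q' \<subseteq> W' \<times> W'" using OA PA PW uw unfolding Q'_def by auto
  have "W \<subset> W'" using setV uw unfolding W'_def by auto
  moreover have "W' \<subseteq> V" using setV WV unfolding W'_def by auto
  moreover note QA QW
  moreover have "\<forall>p q. (p,q)\<in>Q' \<longrightarrow> (q,p)\<notin>Q'"
  proof (intro allI impI)
    fix p q assume pq: "(p,q) \<in> Q'"
    have "(w,u) \<notin> F" "(u,w) \<notin> F" unfolding F_def by auto
    note nF = this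
    have pqc: "(p,q) \<in> Q \<or> (p,q) \<in> P \<or> (p,q) = (u,w) \<or> (p,q) = (v,z)" using pq unfolding Q'_def by blast
    have WQ: "\<And>a b. (a,b) \<in> Q \<Longrightarrow> a \<in> W \<and> b \<in> W" using OW by blast
    have c1: "(q,p) \<notin> Q"
    proof
      assume qp: "(q,p) \<in> Q"
      then have "(p,q) \<notin> Q" using anti by blast
      then have "p \<notin> W \<or> q \<notin> W" using pqc PR uw vz by auto
      then show False using WQ[OF qp] by blast
    qed
    have c2: "(q,p) \<notin> P"
    proof
      assume qp: "(q,p) \<in> P"
      then have "p \<notin> W" "q \<notin> W" "(p,q) \<notin> P" using PR by blast+
      then show False using pqc WQ uw vz by auto
    qed
    have c3: "(q,p) \<noteq> (u,w)"
    proof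
      assume "(q,p) = (u,w)"
      then have e: "q = u" "p = w" by auto
      have "(w,u) \<notin> Q" using WQ uw by blast
      moreover have "(w,u) \<notin> P" using PR nF by blast
      moreover have "(w,u) \<noteq> (u,w)" using uw by auto
      moreover have "(w,u) \<noteq> (v,z)" using vz nF by auto
      ultimately show False using pqc e by auto
    qed
    have c4: "(q,p) \<noteq> (v,z)"
    proof
      assume "(q,p) = (v,z)"
      then have e: "q = v" "p = z" by auto
      have "(z,v) \<notin> Q" using WQ vz by blast
      moreover have "(z,v) \<notin> P" using PR vz by blast
      moreover have "(z,v) \<noteq> (u,w)" using vz nF by auto
      moreover have "(z,v) \<noteq> (v,z)" using vz by auto
      ultimately show False using pqc e by auto
    qed
    show "(q,p) \<notin> Q'" using c1 c2 c3 c4 unfolding Q'_def by blast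
  qed
  moreover have "strong W' Q'"
  proof -
    have mO: "Q\<^sup>* \<subseteq> Q'\<^sup>*" "P\<^sup>* \<subseteq> Q'\<^sup>*" unfolding Q'_def by (intro rtrancl_mono; blast)+
    have uw': "(u,w) \<in> Q'" "(v,z) \<in> Q'" unfolding Q'_def by auto
    have to: "(p,u) \<in> Q'\<^sup>*" if "p \<in> W'" for p
    proof (cases "p \<in> W")
      case True then show ?thesis using sO uw mO by (auto simp: strong_def)
    next
      case False
      then have "(p,v) \<in> P\<^sup>*" using that pp unfolding W'_def by auto
      moreover have "(z,u) \<in> Q\<^sup>*" using sO uw vz by (auto simp: strong_def)
      ultimately show ?thesis using mO uw' by (meson rtrancl_into_rtrancl rtrancl_trans subsetD)
    qed
    have frm: "(u,q) \<in> Q'\<^sup>*" if "q \<in> W'" for q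
    proof (cases "q \<in> W")
      case True then show ?thesis using sO uw mO by (auto simp: strong_def)
    next
      case False
      then have "(w,q) \<in> P\<^sup>*" using that pp unfolding W'_def by auto
      then show ?thesis using mO uw' by (meson converse_rtrancl_into_rtrancl subsetD)
    qed
    show ?thesis unfolding strong_def using to frm by (meson rtrancl_trans)
  qed
  ultimately show ?thesis by blast
qed

lemma robbins:
  assumes sym: "\<forall>a b. (a,b)\<in>A \<longrightarrow> (b,a)\<in>A" and AV: "A \<subseteq> V \<times> V" and fin: "finite V"
    and str: "strong V A" and nb: "\<not> has_bridge V A" and a: "a \<in> V"
  shows "\<exists>Q. Q \<subseteq> A \<and> (\<forall>p q. (p,q)\<in>Q \<longrightarrow> (q,p)\<notin>Q) \<and> strong V Q"
proof -
  have main: "\<And>W Q. W \<subseteq> V \<Longrightarrow> a \<in> W \<Longrightarrow> Q \<subseteq> A \<Longrightarrow> Q \<subseteq> W \<times> W \<Longrightarrow>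
     (\<forall>p q. (p,q)\<in>Q \<longrightarrow> (q,p)\<notin>Q) \<Longrightarrow> strong W Q \<Longrightarrow>
     \<exists>Q. Q \<subseteq> A \<and> (\<forall>p q. (p,q)\<in>Q \<longrightarrow> (q,p)\<notin>Q) \<and> strong V Q"
  proof -
    fix W Q
    show "W \<subseteq> V \<Longrightarrow> a \<in> W \<Longrightarrow> Q \<subseteq> A \<Longrightarrow> Q \<subseteq> W \<times> W \<Longrightarrow>
     (\<forall>p q. (p,q)\<in>Q \<longrightarrow> (q,p)\<notin>Q) \<Longrightarrow> strong W Q \<Longrightarrow>
     \<exists>Q. Q \<subseteq> A \<and> (\<forall>p q. (p,q)\<in>Q \<longrightarrow> (q,p)\<notin>Q) \<and> strong V Q"
    proof (induction "card (V - W)" arbitrary: W Q rule: less_induct)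
      case less
      show ?case
      proof (cases "W = V")
        case True then show ?thesis using less.prems by blast
      next
        case False
        obtain W' Q' where st: "W \<subset> W'" "W' \<subseteq> V" "Q' \<subseteq> A" "Q' \<subseteq> W' \<times> W'"
          "\<forall>p q. (p,q)\<in>Q' \<longrightarrow> (q,p)\<notin>Q'" "strong W' Q'"
          using robbins_step[OF sym AV str nb less.prems(1) less.prems(2) False less.prems(3-6)] by blast
        have "card (V - W') < card (V - W)"
          using st(1,2) fin by (intro psubset_card_mono) auto
        then show ?thesis using less.hyps st less.prems(2) by blast
      qed
    qed
  qed
  show ?thesis by (rule main[of "{a}" "{}"]) (auto simp: a strong_def)
qed


lemma two_elems:
  assumes "2 \<le> card S" obtains x y where "x \<in> S" "y \<in> S" "x \<noteq> y"
proof -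
  have "\<not> (\<forall>x\<in>S. \<forall>y\<in>S. x = y)"
  proof
    assume "\<forall>x\<in>S. \<forall>y\<in>S. x = y"
    moreover have "finite S" using assms by (metis card.infinite not_numeral_le_zero)
    ultimately have "card S \<le> 1" using card_le_Suc0_iff_eq[of S] by simp
    then show False using assms by simp
  qed
  then show ?thesis using that by blast
qed

lemma lambda_bound:
  assumes finA: "finite A" and S2: "2 \<le> card S"
    and H: "\<forall>i<m. strong_subgraph_containing V A S (fst (H i)) (snd (H i))"
    and D: "\<forall>i<m. \<forall>j<m. i \<noteq> j \<longrightarrow> snd (H i) \<inter> snd (H j) = {}"
  shows "m \<le> card A"
proof -
  obtain x y where xy: "x \<in> S" "y \<in> S" "x \<noteq> y" using two_elems[OF S2] by blast
  have ne: "snd (H i) \<noteq> {}" if "i < m" for i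
  proof
    assume e: "snd (H i) = {}"
    have "(x,y) \<in> (snd (H i))\<^sup>*" using H that xy
      unfolding strong_subgraph_containing_def strong_def by blast
    then show False using e xy by simp
  qed
  define f where "f i = (SOME p. p \<in> snd (H i))" for i
  have fi: "f i \<in> snd (H i)" if "i < m" for i
    using ne[OF that] unfolding f_def by (simp add: some_in_eq)
  have "inj_on f {..<m}"
  proof (rule inj_onI)
    fix i j assume "i \<in> {..<m}" "j \<in> {..<m}" "f i = f j"
    then show "i = j" using fi D by (metis disjoint_iff lessThan_iff)
  qed
  moreover have "f ` {..<m} \<subseteq> A" using fi H unfolding strong_subgraph_containing_def by blast
  ultimately have "card {..<m} \<le> card A" using card_inj_on_le finA by blast
  then show ?thesis by simp
qed

lemma lambda_ge2:
  assumes finA: "finite A" and S2: "2 \<le> card S" and SV: "S \<subseteq> V"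
    and s1: "strong V O1" and s2: "strong V O2" and A1: "O1 \<subseteq> A" and A2: "O2 \<subseteq> A"
    and dj: "O1 \<inter> O2 = {}" and V1: "O1 \<subseteq> V \<times> V" and V2: "O2 \<subseteq> V \<times> V"
  shows "2 \<le> lambda_S V A S"
proof -
  define M where "M = {m. \<exists>H :: nat \<Rightarrow> 'a set \<times> ('a \<times> 'a) set.
       (\<forall>i<m. strong_subgraph_containing V A S (fst (H i)) (snd (H i))) \<and>
       (\<forall>i<m. \<forall>j<m. i \<noteq> j \<longrightarrow> snd (H i) \<inter> snd (H j) = {})}"
  define H where "H = (\<lambda>i::nat. if i = 0 then (V, O1) else (V, O2))"
  have "(\<forall>i<2. strong_subgraph_containing V A S (fst (H i)) (snd (H i))) \<and>
       (\<forall>i<2. \<forall>j<2. i \<noteq> j \<longrightarrow> snd (H i) \<inter> snd (H j) = {})"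
    unfolding H_def strong_subgraph_containing_def using assms
    by (auto simp: less_2_cases_iff)
  then have "2 \<in> M" unfolding M_def by blast
  moreover have "bdd_above M" unfolding M_def bdd_above_def
    using lambda_bound[OF finA S2] by blast
  ultimately have "2 \<le> Sup M" by (rule cSup_upper)
  then show ?thesis unfolding lambda_S_def M_def by simp
qed

lemma lambda_le1:
  assumes sym: "\<forall>a b. (a,b)\<in>A \<longrightarrow> (b,a)\<in>A" and str: "strong V A"
    and br: "is_bridge V A x y" and xS: "x \<in> S" "y \<in> S" and xV: "x \<in> V" "y \<in> V"
  shows "lambda_S V A S \<le> 1"
proof -
  define M where "M = {m. \<exists>H :: nat \<Rightarrow> 'a set \<times> ('a \<times> 'a) set.
       (\<forall>i<m. strong_subgraph_containing V A S (fst (H i)) (snd (H i))) \<and>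
       (\<forall>i<m. \<forall>j<m. i \<noteq> j \<longrightarrow> snd (H i) \<inter> snd (H j) = {})}"
  have br1: "\<not> underlying_connected V (A - {(x,y),(y,x)})" using br unfolding is_bridge_def by blast
  have arc: "(x,y) \<in> A'" if "strong_subgraph_containing V A S V' A'" for V' A'
  proof -
    have "(x,y) \<in> A'\<^sup>*" "A' \<subseteq> A" using that xS unfolding strong_subgraph_containing_def strong_def by blast+
    then show ?thesis using bridge_arc[OF sym str br1] xV by blast
  qed
  have "0 \<in> M" unfolding M_def by auto
  moreover have "m \<le> 1" if "m \<in> M" for m
  proof (rule ccontr)
    assume "\<not> m \<le> 1"
    obtain H where H: "\<forall>i<m. strong_subgraph_containing V A S (fst (H i)) (snd (H i))"
      "\<forall>i<m. \<forall>j<m. i \<noteq> j \<longrightarrow> snd (H i) \<inter> snd (H j) = {}"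
      using \<open>m \<in> M\<close> unfolding M_def by blast
    have "0 < m" "1 < m" using \<open>\<not> m \<le> 1\<close> by auto
    then have "(x,y) \<in> snd (H 0)" "(x,y) \<in> snd (H 1)" using H(1) arc by blast+
    moreover have "snd (H 0) \<inter> snd (H 1) = {}" using H(2) \<open>0 < m\<close> \<open>1 < m\<close> by simp
    ultimately show False by blast
  qed
  ultimately have "Sup M \<le> 1" by (intro cSup_least) auto
  then show ?thesis unfolding lambda_S_def M_def by simp
qed

theorem theorem4p4:
  fixes V :: "'a set" and A :: "('a \<times> 'a) set" and n k :: nat
  assumes "symmetric_digraph V A" and "strong V A" and "card V = n"
    and "2 \<le> k" and "k \<le> n"
  shows "lambda_k V A k \<ge> 2 \<longleftrightarrow> \<not> has_bridge V A"
proof -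
  have finV: "finite V" and AV: "A \<subseteq> V \<times> V" and loop: "\<forall>x. (x,x) \<notin> A"
    and sym: "\<forall>a b. (a,b)\<in>A \<longrightarrow> (b,a)\<in>A"
    using assms(1) unfolding symmetric_digraph_def digraph_def by auto
  have finA: "finite A" using finV AV by (meson finite_SigmaI finite_subset)
  define L where "L = {lambda_S V A S | S. S \<subseteq> V \<and> card S = k}"
  have finL: "finite L"
  proof -
    have "L \<subseteq> (lambda_S V A) ` Pow V" unfolding L_def by auto
    then show ?thesis using finV by (meson finite_Pow_iff finite_imageI finite_subset)
  qed
  obtain S0 where "S0 \<subseteq> V" "card S0 = k" using obtain_subset_with_card_n assms(3,5) by metis
  then have neL: "L \<noteq> {}" unfolding L_def by blast
  show ?thesis
  proof
    assume ge: "2 \<le> lambda_k V A k"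
    show "\<not> has_bridge V A"
    proof
      assume "has_bridge V A"
      then obtain x y where br: "is_bridge V A x y" unfolding has_bridge_def by blast
      then have xyA: "(x,y) \<in> A" unfolding is_bridge_def by blast
      then have xy: "x \<in> V" "y \<in> V" "x \<noteq> y" using AV loop by auto
      have "card (V - {x,y}) = n - 2" using xy finV assms(3) by (simp add: card_Diff_subset)
      then obtain T where T: "T \<subseteq> V - {x,y}" "card T = k - 2"
        using obtain_subset_with_card_n[of "k-2" "V - {x,y}"] assms(4,5) by (metis diff_le_mono)
      have finT: "finite T" using T finV by (meson finite_Diff finite_subset)
      define S where "S = insert x (insert y T)"
      have "x \<notin> T" "y \<notin> T" using T by auto
      then have "card S = k" unfolding S_def using T finT xy assms(4) by simp
      moreover have "S \<subseteq> V" unfolding S_def using T xy by auto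
      ultimately have "lambda_S V A S \<in> L" unfolding L_def by blast
      then have "lambda_k V A k \<le> lambda_S V A S" unfolding lambda_k_def L_def[symmetric]
        using finL by simp
      moreover have "lambda_S V A S \<le> 1"
        using lambda_le1[OF sym assms(2) br] xy unfolding S_def by simp
      ultimately show False using ge by simp
    qed
  next
    assume nb: "\<not> has_bridge V A"
    obtain a where a: "a \<in> V" using \<open>S0 \<subseteq> V\<close> \<open>card S0 = k\<close> assms(4) by fastforce
    obtain Q where Q: "Q \<subseteq> A" "\<forall>p q. (p,q)\<in>Q \<longrightarrow> (q,p)\<notin>Q" "strong V Q"
      using robbins[OF sym AV finV assms(2) nb a] by blast
    have Qc: "Q\<inverse> \<subseteq> A" using Q(1) sym by auto
    have sQc: "strong V (Q\<inverse>)" using Q(3) unfolding strong_def by (simp add: rtrancl_converse)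
    have dj: "Q \<inter> Q\<inverse> = {}" using Q(2) by auto
    have "\<forall>l\<in>L. 2 \<le> l"
    proof
      fix l assume "l \<in> L"
      then obtain S where S: "l = lambda_S V A S" "S \<subseteq> V" "card S = k" unfolding L_def by blast
      show "2 \<le> l" unfolding S(1)
        using lambda_ge2[OF finA _ S(2) Q(3) sQc Q(1) Qc dj] Q(1) Qc AV S(3) assms(4) by blast
    qed
    then show "2 \<le> lambda_k V A k" unfolding lambda_k_def L_def[symmetric]
      using finL neL by simp
  qed
qed

end
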